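(* Let $k$ be a field, $R=k[x_1,\ldots,x_n]$ localized at $(x_1,\ldots,x_n)$, and let $\Delta$ be a tree with vertex set $\{x_1,\ldots,x_n\}$ and facet ideal $I=\mathcal{F}(\Delta)$. Then $I$ satisfies condition $\mathcal{F}_1$, i.e. $\mu(I_p)\le\dim R_p$ for every prime ideal $p$ of $R$ with $I\subseteq p$, where $\mu$ denotes the minimal number of generators.
   Context: A simplicial complex on a vertex set $V$ is a collection of subsets of $V$ containing all singletons and closed under subsets; its facets are its maximal faces. Vertices are identified with variables. The facet ideal $\mathcal{F}(\Delta)$ is generated by $\prod_{x_j\in F}x_j$, $F$ a facet. A subcomplex of $\Delta$ is a simplicial complex whose facet set is a subset of that of $\Delta$. $\Delta$ is connected if any two facets are joined by a chain of facets with consecutive members intersecting. A facet $F$ is a leaf if either $F$ is the only facet, or there is a facet $G\neq F$ with $F\cap F'\subseteq F\cap G$ for every facet $F'\neq F$. A connected $\Delta$ is a tree if every nonempty subcomplex has a leaf. *)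

theory Defs
  imports "HOL-Library.Poly_Mapping" "HOL-Library.Extended_Nat"
begin

type_synonym ('v, 'k) mpoly = "('v \<Rightarrow>\<^sub>0 nat) \<Rightarrow>\<^sub>0 'k"

definition var :: "'v \<Rightarrow> ('v, 'k::comm_ring_1) mpoly" where
  "var v = Poly_Mapping.single (Poly_Mapping.single v 1) 1"

definition const_coeff :: "('v, 'k::comm_ring_1) mpoly \<Rightarrow> 'k" where
  "const_coeff f = Poly_Mapping.lookup f 0"

definition max_ideal :: "('v, 'k::comm_ring_1) mpoly set" where
  "max_ideal = {f. const_coeff f = 0}"

definition is_ideal :: "'a::comm_ring_1 set \<Rightarrow> bool" where
  "is_ideal J \<longleftrightarrow> 0 \<in> J \<and> (\<forall>x\<in>J. \<forall>y\<in>J. x + y \<in> J) \<and> (\<forall>r. \<forall>x\<in>J. r * x \<in> J)"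

definition gen_ideal :: "'a::comm_ring_1 set \<Rightarrow> 'a set" where
  "gen_ideal A = \<Inter>{J. is_ideal J \<and> A \<subseteq> J}"

definition is_prime_ideal :: "'a::comm_ring_1 set \<Rightarrow> bool" where
  "is_prime_ideal P \<longleftrightarrow> is_ideal P \<and> 1 \<notin> P \<and> (\<forall>a b. a * b \<in> P \<longrightarrow> a \<in> P \<or> b \<in> P)"

text \<open>Height of a prime: supremum of lengths h of strict chains of primes
  P_0 \<subset> P_1 \<subset> ... \<subset> P_h = P.  This is the Krull dimension of the localization at P.\<close>
definition height :: "'a::comm_ring_1 set \<Rightarrow> enat" where
  "height P = Sup {enat h | h. \<exists>c :: nat \<Rightarrow> 'a set.
      (\<forall>i\<le>h. is_prime_ideal (c i)) \<and> (\<forall>i<h. c i \<subset> c (Suc i)) \<and> c h = P}"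

text \<open>Minimal number of generators of the extended ideal I A_P in the localization A_P,
  written out without constructing A_P: a list gs of elements of I generates I A_P iff
  every g in I satisfies s*g in (gs) for some s outside P.  (Generators of I A_P may be
  taken in I since every element of I A_P is an element of I times a unit.)\<close>
definition mu_loc :: "'a::comm_ring_1 set \<Rightarrow> 'a set \<Rightarrow> nat" where
  "mu_loc I P = (LEAST r. \<exists>gs. length gs = r \<and> set gs \<subseteq> I \<and>
       (\<forall>g\<in>I. \<exists>s. s \<notin> P \<and> s * g \<in> gen_ideal (set gs)))"

definition is_facet_set :: "'v set set \<Rightarrow> bool" where
  "is_facet_set Fs \<longleftrightarrow> finite Fs \<and> (\<forall>F\<in>Fs. F \<noteq> {} \<and> finite F)
     \<and> (\<forall>F\<in>Fs. \<forall>G\<in>Fs. F \<subseteq> G \<longrightarrow> F = G) \<and> \<Union>Fs = UNIV"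

definition facets_connected :: "'v set set \<Rightarrow> bool" where
  "facets_connected S \<longleftrightarrow> (\<forall>F\<in>S. \<forall>G\<in>S.
      (F, G) \<in> {(A, B). A \<in> S \<and> B \<in> S \<and> A \<inter> B \<noteq> {}}\<^sup>*)"

definition is_leaf :: "'v set set \<Rightarrow> 'v set \<Rightarrow> bool" where
  "is_leaf S F \<longleftrightarrow> F \<in> S \<and> (S = {F} \<or>
      (\<exists>G\<in>S. G \<noteq> F \<and> (\<forall>F'\<in>S. F' \<noteq> F \<longrightarrow> F \<inter> F' \<subseteq> F \<inter> G)))"

definition is_tree :: "'v set set \<Rightarrow> bool" where
  "is_tree Fs \<longleftrightarrow> facets_connected Fs \<and>
      (\<forall>S. S \<subseteq> Fs \<and> S \<noteq> {} \<longrightarrow> (\<exists>F. is_leaf S F))"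

definition facet_ideal :: "'v set set \<Rightarrow> ('v, 'k::comm_ring_1) mpoly set" where
  "facet_ideal Fs = gen_ideal ((\<lambda>F. \<Prod>v\<in>F. var v) ` Fs)"

end

theory Submission imports Defs begin
lemma gen_ideal_ideal: "is_ideal (gen_ideal A)"
  unfolding gen_ideal_def is_ideal_def by auto

lemma gen_ideal_sub: "A \<subseteq> gen_ideal A"
  unfolding gen_ideal_def by auto

lemma gen_ideal_least: "is_ideal J \<Longrightarrow> A \<subseteq> J \<Longrightarrow> gen_ideal A \<subseteq> J"
  unfolding gen_ideal_def by auto

lemma prime_prod:
  assumes "is_prime_ideal P" "finite A" "prod f A \<in> P"
  shows "\<exists>a\<in>A. f a \<in> P"
  using assms(2,3)
proof (induction A rule: finite_induct)
  case empty then show ?case using assms(1) by (simp add: is_prime_ideal_def)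
next
  case (insert x F) then show ?case using assms(1) unfolding is_prime_ideal_def by auto
qed

lemma comb:
  fixes S :: "'v set set"
  assumes "finite S" "\<forall>S'. S' \<subseteq> S \<and> S' \<noteq> {} \<longrightarrow> (\<exists>F. is_leaf S' F)"
    "finite W" "\<forall>F\<in>S. F \<inter> W \<noteq> {}"
  shows "\<exists>T\<subseteq>S. card T \<le> card W \<and> (\<forall>G\<in>S. \<exists>F\<in>T. F \<inter> W \<subseteq> G)"
  using assms
proof (induction "card S" arbitrary: S W rule: less_induct)
  case less
  show ?case
  proof (cases "S = {}")
    case True then show ?thesis by auto
  next
    case False
    then obtain F where lf: "is_leaf S F" using less.prems(2) by blast
    then have FS: "F \<in> S" unfolding is_leaf_def by auto
    have her: "\<forall>S'. S' \<subseteq> S - {X} \<and> S' \<noteq> {} \<longrightarrow> (\<exists>F. is_leaf S' F)" for X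
      using less.prems(2) by blast
    have cl: "card (S - {X}) < card S" if "X \<in> S" for X
      using that less.prems(1) by (meson card_Diff1_less)
    show ?thesis
    proof (cases "S = {F}")
      case True
      have "W \<noteq> {}" using less.prems(4) FS by auto
      then have "card W \<ge> 1" using less.prems(3) by (simp add: Suc_leI card_gt_0_iff)
      then show ?thesis using True by (intro exI[of _ "{F}"]) auto
    next
      case False
      then obtain G where G: "G \<in> S" "G \<noteq> F" "\<forall>F'\<in>S. F' \<noteq> F \<longrightarrow> F \<inter> F' \<subseteq> F \<inter> G"
        using lf unfolding is_leaf_def by auto
      show ?thesis
      proof (cases "F \<inter> W \<subseteq> G")
        case True
        obtain T where T: "T \<subseteq> S - {G}" "card T \<le> card W" "\<forall>G'\<in>S - {G}. \<exists>F\<in>T. F \<inter> W \<subseteq> G'"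
          using less.hyps[OF cl[OF G(1)] _ her less.prems(3)] less.prems(1,4) by auto
        obtain F0 where "F0 \<in> T" "F0 \<inter> W \<subseteq> F" using T(3) FS G(2) by auto
        then have "F0 \<inter> W \<subseteq> G" using True by auto
        then show ?thesis using T \<open>F0 \<in> T\<close> by (intro exI[of _ T]) auto
      next
        case False
        then obtain w where w: "w \<in> F" "w \<in> W" "w \<notin> G" by auto
        have wn: "w \<notin> F'" if "F' \<in> S" "F' \<noteq> F" for F'
          using G(3) that w by blast
        have tr: "\<forall>F'\<in>S - {F}. F' \<inter> (W - {w}) \<noteq> {}"
          using less.prems(4) wn by fastforce
        obtain T where T: "T \<subseteq> S - {F}" "card T \<le> card (W - {w})"
            "\<forall>G'\<in>S - {F}. \<exists>F\<in>T. F \<inter> (W - {w}) \<subseteq> G'"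
          using less.hyps[OF cl[OF FS] _ her _ tr] less.prems(1,3) by auto
        have fT: "finite T" using T(1) less.prems(1) finite_subset by blast
        have "card (insert F T) \<le> card W"
        proof -
          have "card (insert F T) \<le> Suc (card T)" by (simp add: card_insert_if fT)
          moreover have "card (W - {w}) + 1 = card W" using w less.prems(3)
            by (metis Suc_eq_plus1 card_Suc_Diff1)
          ultimately show ?thesis using T(2) by linarith
        qed
        moreover have "\<forall>G'\<in>S. \<exists>F'\<in>insert F T. F' \<inter> W \<subseteq> G'"
        proof
          fix G' assume "G' \<in> S"
          show "\<exists>F'\<in>insert F T. F' \<inter> W \<subseteq> G'"
          proof (cases "G' = F")
            case True then show ?thesis by auto
          next
            case False
            then obtain F1 where "F1 \<in> T" "F1 \<inter> (W - {w}) \<subseteq> G'" using T(3) \<open>G' \<in> S\<close> by auto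
            moreover have "w \<notin> F1" using wn \<open>F1 \<in> T\<close> T(1) by auto
            ultimately show ?thesis by blast
          qed
        qed
        ultimately show ?thesis using T(1) FS by (intro exI[of _ "insert F T"]) auto
      qed
    qed
  qed
qed


lemma key_lemma:
  fixes a b :: "('v::finite, 'k::field) mpoly"
  assumes "m1 \<in> Poly_Mapping.keys a" "\<forall>v\<in>S. Poly_Mapping.lookup m1 v = 0" "m2 \<in> Poly_Mapping.keys b" "\<forall>v\<in>S. Poly_Mapping.lookup m2 v = 0"
  shows "\<exists>m\<in>Poly_Mapping.keys (a*b). \<forall>v\<in>S. Poly_Mapping.lookup m v = 0"
proof -
  obtain \<iota> :: "'v \<Rightarrow> nat" and n where "\<iota> ` UNIV = {i. i < n}" "inj \<iota>"
    using finite_imp_inj_to_nat_seg[OF finite_UNIV[where 'a='v]] by blast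
  then have inj: "inj \<iota>" by simp
  define \<tau> where "\<tau> m = Abs_poly_mapping (\<lambda>n. if n \<in> range \<iota> then Poly_Mapping.lookup m (inv \<iota> n) else 0)"
    for m :: "'v \<Rightarrow>\<^sub>0 nat"
  have l\<tau>: "Poly_Mapping.lookup (\<tau> m) n = (if n \<in> range \<iota> then Poly_Mapping.lookup m (inv \<iota> n) else 0)" for m n
  proof -
    have "finite {n. (if n \<in> range \<iota> then Poly_Mapping.lookup m (inv \<iota> n) else 0) \<noteq> 0}"
      by (rule finite_subset[of _ "range \<iota>"]) auto
    then show ?thesis unfolding \<tau>_def by simp
  qed
  have \<tau>add: "\<tau> (x + y) = \<tau> x + \<tau> y" for x y
    by (rule poly_mapping_eqI) (simp add: l\<tau> lookup_add)
  have \<tau>inj: "x = y" if "\<tau> x = \<tau> y" for x y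
  proof (rule poly_mapping_eqI)
    fix v
    have "Poly_Mapping.lookup (\<tau> x) (\<iota> v) = Poly_Mapping.lookup (\<tau> y) (\<iota> v)" using that by simp
    then show "Poly_Mapping.lookup x v = Poly_Mapping.lookup y v" by (simp add: l\<tau> inv_f_f[OF inj])
  qed
  define A where "A = {m\<in>Poly_Mapping.keys a. \<forall>v\<in>S. Poly_Mapping.lookup m v = 0}"
  define B where "B = {m\<in>Poly_Mapping.keys b. \<forall>v\<in>S. Poly_Mapping.lookup m v = 0}"
  have fA: "finite (\<tau> ` A)" "\<tau> ` A \<noteq> {}" using assms(1,2) unfolding A_def by auto
  have fB: "finite (\<tau> ` B)" "\<tau> ` B \<noteq> {}" using assms(3,4) unfolding B_def by auto
  obtain a0 where a0: "a0 \<in> A" "\<tau> a0 = Max (\<tau> ` A)" using Max_in[OF fA] by auto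
  obtain b0 where b0: "b0 \<in> B" "\<tau> b0 = Max (\<tau> ` B)" using Max_in[OF fB] by auto
  have a0m: "\<tau> m \<le> \<tau> a0" if "m \<in> A" for m using a0(2) fA(1) that by simp
  have b0m: "\<tau> m \<le> \<tau> b0" if "m \<in> B" for m using b0(2) fB(1) that by simp
  define q where "q = a0 + b0"
  have "Poly_Mapping.lookup (a*b) q = (\<Sum>(l, r). Poly_Mapping.lookup a l * Poly_Mapping.lookup b r when q = l + r)"
    by (simp add: times_poly_mapping.rep_eq prod_fun_unfold_prod)
  also have "\<dots> = (\<Sum>lr. (Poly_Mapping.lookup a a0 * Poly_Mapping.lookup b b0 when lr = (a0, b0)))"
  proof (rule Sum_any.cong)
    fix lr :: "('v \<Rightarrow>\<^sub>0 nat) \<times> ('v \<Rightarrow>\<^sub>0 nat)"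
    obtain l r where lr: "lr = (l, r)" by (cases lr)
    show "(case lr of (l, r) \<Rightarrow> Poly_Mapping.lookup a l * Poly_Mapping.lookup b r when q = l + r) =
          (Poly_Mapping.lookup a a0 * Poly_Mapping.lookup b b0 when lr = (a0, b0))"
    proof (cases "q = l + r \<and> Poly_Mapping.lookup a l \<noteq> 0 \<and> Poly_Mapping.lookup b r \<noteq> 0")
      case True
      then have qe: "q = l + r" and "l \<in> Poly_Mapping.keys a" "r \<in> Poly_Mapping.keys b" by (auto simp: in_keys_iff)
      have "\<forall>v\<in>S. Poly_Mapping.lookup q v = 0" using a0(1) b0(1) unfolding q_def A_def B_def
        by (simp add: lookup_add)
      then have "\<forall>v\<in>S. Poly_Mapping.lookup l v = 0 \<and> Poly_Mapping.lookup r v = 0" using qe by (simp add: lookup_add)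
      then have "l \<in> A" "r \<in> B" unfolding A_def B_def using \<open>l \<in> Poly_Mapping.keys a\<close> \<open>r \<in> Poly_Mapping.keys b\<close> by auto
      then have le: "\<tau> l \<le> \<tau> a0" "\<tau> r \<le> \<tau> b0" using a0m b0m by auto
      have sum: "\<tau> l + \<tau> r = \<tau> a0 + \<tau> b0" using qe unfolding q_def by (metis \<tau>add)
      have "\<tau> l = \<tau> a0"
      proof (rule ccontr)
        assume "\<tau> l \<noteq> \<tau> a0"
        then have "\<tau> l < \<tau> a0" using le by simp
        then have "\<tau> l + \<tau> r < \<tau> a0 + \<tau> b0" using le(2) by (rule add_less_le_mono)
        then show False using sum by simp
      qed
      then have "l = a0" using \<tau>inj by blast
      then have "r = b0" using qe unfolding q_def by simp
      then show ?thesis using lr \<open>l = a0\<close> qe by simp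
    next
      case False
      then have "(case lr of (l, r) \<Rightarrow> Poly_Mapping.lookup a l * Poly_Mapping.lookup b r when q = l + r) = 0"
        using lr by auto
      moreover have "(Poly_Mapping.lookup a a0 * Poly_Mapping.lookup b b0 when lr = (a0, b0)) = 0"
        using False lr q_def by (auto simp: when_def)
      ultimately show ?thesis by simp
    qed
  qed
  also have "\<dots> = Poly_Mapping.lookup a a0 * Poly_Mapping.lookup b b0" by simp
  also have "\<dots> \<noteq> 0" using a0(1) b0(1) unfolding A_def B_def by (simp add: in_keys_iff)
  finally have "q \<in> Poly_Mapping.keys (a*b)" by (simp add: in_keys_iff)
  moreover have "\<forall>v\<in>S. Poly_Mapping.lookup q v = 0" using a0(1) b0(1) unfolding q_def A_def B_def
    by (simp add: lookup_add)
  ultimately show ?thesis by blast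
qed

definition Zid :: "'v set \<Rightarrow> ('v, 'k::comm_ring_1) mpoly set" where
  "Zid S = {f. \<forall>m\<in>Poly_Mapping.keys f. \<exists>v\<in>S. 0 < Poly_Mapping.lookup m v}"

lemma Zid_ideal: "is_ideal (Zid S :: ('v, 'k::comm_ring_1) mpoly set)"
  unfolding is_ideal_def
proof (intro conjI ballI allI)
  show "0 \<in> Zid S" unfolding Zid_def by simp
next
  fix x y :: "('v, 'k) mpoly" assume "x \<in> Zid S" "y \<in> Zid S"
  moreover have "Poly_Mapping.keys (x + y) \<subseteq> Poly_Mapping.keys x \<union> Poly_Mapping.keys y" by (rule keys_add)
  ultimately show "x + y \<in> Zid S" unfolding Zid_def by blast
next
  fix r x :: "('v, 'k) mpoly" assume x: "x \<in> Zid S"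
  show "r * x \<in> Zid S" unfolding Zid_def
  proof (intro CollectI ballI)
    fix m assume "m \<in> Poly_Mapping.keys (r * x)"
    then obtain a b where "m = a + b" "b \<in> Poly_Mapping.keys x" using keys_mult[of r x] by blast
    then obtain v where "v \<in> S" "0 < Poly_Mapping.lookup b v" using x unfolding Zid_def by blast
    then show "\<exists>v\<in>S. 0 < Poly_Mapping.lookup m v" using \<open>m = a + b\<close> by (auto simp: lookup_add)
  qed
qed

lemma keys_var: "Poly_Mapping.keys (var v :: ('v, 'k::comm_ring_1) mpoly) = {Poly_Mapping.single v 1}"
  unfolding var_def by simp

lemma var_in_Zid: "v \<in> S \<Longrightarrow> (var v :: ('v, 'k::comm_ring_1) mpoly) \<in> Zid S"
  unfolding Zid_def by (auto simp: keys_var lookup_single when_def)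

lemma var_notin_Zid: "w \<notin> S \<Longrightarrow> (var w :: ('v, 'k::comm_ring_1) mpoly) \<notin> Zid S"
  unfolding Zid_def by (auto simp: keys_var lookup_single when_def)

lemma Zid_mono: "S \<subseteq> S' \<Longrightarrow> Zid S \<subseteq> Zid S'"
  unfolding Zid_def by blast

lemma Zid_prime: "is_prime_ideal (Zid S :: ('v::finite, 'k::field) mpoly set)"
  unfolding is_prime_ideal_def
proof (intro conjI allI impI)
  show "is_ideal (Zid S :: ('v, 'k) mpoly set)" by (rule Zid_ideal)
  show "(1 :: ('v, 'k) mpoly) \<notin> Zid S" unfolding Zid_def by simp
next
  fix a b :: "('v, 'k) mpoly"
  assume ab: "a * b \<in> Zid S"
  show "a \<in> Zid S \<or> b \<in> Zid S"
  proof (rule ccontr)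
    assume "\<not> (a \<in> Zid S \<or> b \<in> Zid S)"
    then obtain m1 m2 where "m1 \<in> Poly_Mapping.keys a" "\<forall>v\<in>S. Poly_Mapping.lookup m1 v = 0"
       "m2 \<in> Poly_Mapping.keys b" "\<forall>v\<in>S. Poly_Mapping.lookup m2 v = 0"
      unfolding Zid_def by auto
    from key_lemma[OF this] ab show False unfolding Zid_def by fastforce
  qed
qed

lemma ideal_sum:
  assumes "is_ideal J" "finite A" "\<And>a. a \<in> A \<Longrightarrow> f a \<in> J"
  shows "sum f A \<in> J"
  using assms(2,3)
proof (induction A rule: finite_induct)
  case empty then show ?case using assms(1) by (simp add: is_ideal_def)
next
  case (insert x F) then show ?case using assms(1) by (simp add: is_ideal_def)
qed

lemma sum_monomials:
  "f = (\<Sum>m\<in>Poly_Mapping.keys f. Poly_Mapping.single m (Poly_Mapping.lookup f m))"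
proof (rule poly_mapping_eqI)
  fix k
  have "Poly_Mapping.lookup (\<Sum>m\<in>Poly_Mapping.keys f. Poly_Mapping.single m (Poly_Mapping.lookup f m)) k
     = (\<Sum>m\<in>Poly_Mapping.keys f. (Poly_Mapping.lookup f m when m = k))"
    by (simp add: lookup_sum lookup_single)
  also have "\<dots> = Poly_Mapping.lookup f k"
    by (cases "k \<in> Poly_Mapping.keys f") (simp_all add: when_def in_keys_iff)
  finally show "Poly_Mapping.lookup f k =
     Poly_Mapping.lookup (\<Sum>m\<in>Poly_Mapping.keys f. Poly_Mapping.single m (Poly_Mapping.lookup f m)) k" by simp
qed

lemma Zid_sub:
  assumes "is_ideal P" "(var ` S :: ('v, 'k::comm_ring_1) mpoly set) \<subseteq> P"
  shows "Zid S \<subseteq> P"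
proof
  fix f :: "('v, 'k) mpoly" assume f: "f \<in> Zid S"
  have "Poly_Mapping.single m (Poly_Mapping.lookup f m) \<in> P" if m: "m \<in> Poly_Mapping.keys f" for m
  proof -
    obtain v where v: "v \<in> S" "0 < Poly_Mapping.lookup m v" using f m unfolding Zid_def by blast
    have me: "Poly_Mapping.single v 1 + (m - Poly_Mapping.single v 1) = m"
      by (rule poly_mapping_eqI) (use v in \<open>auto simp: lookup_add lookup_minus lookup_single when_def\<close>)
    have "Poly_Mapping.single m (Poly_Mapping.lookup f m)
       = Poly_Mapping.single (Poly_Mapping.single v 1 + (m - Poly_Mapping.single v 1)) (Poly_Mapping.lookup f m)"
      by (simp only: me)
    also have "\<dots> = Poly_Mapping.single (m - Poly_Mapping.single v 1) (Poly_Mapping.lookup f m) * var v"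
      unfolding var_def mult_single by (simp add: add.commute)
    finally have "Poly_Mapping.single m (Poly_Mapping.lookup f m)
       = Poly_Mapping.single (m - Poly_Mapping.single v 1) (Poly_Mapping.lookup f m) * var v" .
    moreover have "var v \<in> P" using assms(2) v by auto
    ultimately show ?thesis using assms(1) unfolding is_ideal_def by auto
  qed
  then have "(\<Sum>m\<in>Poly_Mapping.keys f. Poly_Mapping.single m (Poly_Mapping.lookup f m)) \<in> P"
    by (intro ideal_sum[OF assms(1)]) auto
  then show "f \<in> P" using sum_monomials[of f] by simp
qed

lemma ideal_colon:
  fixes s :: "'a::comm_ring_1"
  assumes "is_ideal J"
  shows "is_ideal {g. s * g \<in> J}"
  using assms unfolding is_ideal_def
  by (metis (no_types, lifting) distrib_left mem_Collect_eq mult.left_commute mult_zero_right)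
lemma prod_split_lemma:
  fixes W F G :: "'v::finite set"
  assumes F: "F \<inter> W \<subseteq> G"
  shows "(\<Prod>v\<in>-W. var v) * (\<Prod>v\<in>G. var v) =
    ((\<Prod>v\<in>-W - F. var v) * (\<Prod>v\<in>G - (F \<inter> W). var v)) * (\<Prod>v\<in>F. var v :: ('v, 'k::comm_ring_1) mpoly)"
proof -
  have e1: "(\<Prod>v\<in>-W. var v :: ('v, 'k) mpoly) = (\<Prod>v\<in>-W - F. var v) * (\<Prod>v\<in>F - W. var v)"
  proof -
    have eq: "-W - (F - W) = -W - F" by auto
    have "(\<Prod>v\<in>-W. var v :: ('v, 'k) mpoly) = (\<Prod>v\<in>-W - (F - W). var v) * (\<Prod>v\<in>F - W. var v)"
      by (rule prod.subset_diff) auto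
    then show ?thesis unfolding eq .
  qed
  have e2: "(\<Prod>v\<in>G. var v :: ('v, 'k) mpoly) = (\<Prod>v\<in>G - (F \<inter> W). var v) * (\<Prod>v\<in>F \<inter> W. var v)"
    by (rule prod.subset_diff) (use F in auto)
  have e3: "(\<Prod>v\<in>F. var v :: ('v, 'k) mpoly) = (\<Prod>v\<in>F - W. var v) * (\<Prod>v\<in>F \<inter> W. var v)"
  proof -
    have eq: "F - (F \<inter> W) = F - W" by auto
    have "(\<Prod>v\<in>F. var v :: ('v, 'k) mpoly) = (\<Prod>v\<in>F - (F \<inter> W). var v) * (\<Prod>v\<in>F \<inter> W. var v)"
      by (rule prod.subset_diff) auto
    then show ?thesis unfolding eq .
  qed
  show ?thesis unfolding e1 e2 e3 by (simp only: ac_simps)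
qed
theorem mainTheorem8:
  fixes Fs :: "'v::finite set set"
    and P :: "('v, 'k::field) mpoly set"
  assumes "is_facet_set Fs"
    and "is_tree Fs"
    and "is_prime_ideal P"
    and "P \<subseteq> max_ideal"
    and "(facet_ideal Fs :: ('v, 'k) mpoly set) \<subseteq> P"
  shows "enat (mu_loc (facet_ideal Fs :: ('v, 'k) mpoly set) P) \<le> height P"
proof -
  let ?I = "facet_ideal Fs :: ('v, 'k) mpoly set"
  define W where "W = {v. (var v :: ('v, 'k) mpoly) \<in> P}"
  define mono where "mono F = (\<Prod>v\<in>F. var v :: ('v, 'k) mpoly)" for F
  have fin: "finite Fs" using assms(1) unfolding is_facet_set_def by simp
  have forest: "\<forall>S'. S' \<subseteq> Fs \<and> S' \<noteq> {} \<longrightarrow> (\<exists>F. is_leaf S' F)"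
    using assms(2) unfolding is_tree_def by simp
  have Pid: "is_ideal P" using assms(3) unfolding is_prime_ideal_def by simp
  have gen_in: "mono F \<in> ?I" if "F \<in> Fs" for F
    using that gen_ideal_sub unfolding facet_ideal_def mono_def by blast
  have tr: "\<forall>F\<in>Fs. F \<inter> W \<noteq> {}"
  proof
    fix F assume "F \<in> Fs"
    then have "mono F \<in> P" using gen_in assms(5) by blast
    then obtain v where "v \<in> F" "(var v :: ('v, 'k) mpoly) \<in> P"
      using prime_prod[OF assms(3) finite_subset[OF subset_UNIV finite_UNIV]] unfolding mono_def by blast
    then show "F \<inter> W \<noteq> {}" unfolding W_def by blast
  qed
  have fW: "finite W" by simp
  from comb[OF fin forest fW tr] obtain T where T: "T \<subseteq> Fs" "card T \<le> card W" "\<forall>G\<in>Fs. \<exists>F\<in>T. F \<inter> W \<subseteq> G"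
    by blast
  have fT: "finite T" using T(1) fin finite_subset by blast
  have mu: "mu_loc ?I P \<le> card T"
  proof -
    define s where "s = (\<Prod>v\<in>-W. var v :: ('v, 'k) mpoly)"
    have sP: "s \<notin> P"
    proof
      assume "s \<in> P"
      then obtain v where "v \<in> -W" "(var v :: ('v, 'k) mpoly) \<in> P"
        using prime_prod[OF assms(3) finite_subset[OF subset_UNIV finite_UNIV]] unfolding s_def by blast
      then show False unfolding W_def by simp
    qed
    define J where "J = gen_ideal (mono ` T)"
    have Jid: "is_ideal J" unfolding J_def by (rule gen_ideal_ideal)
    have Kid: "is_ideal {g. s * g \<in> J}" by (rule ideal_colon[OF Jid])
    have gens: "mono G \<in> {g. s * g \<in> J}" if G: "G \<in> Fs" for G
    proof -
      from T(3) G obtain F where F: "F \<in> T" "F \<inter> W \<subseteq> G" by blast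
      have eq: "s * mono G = ((\<Prod>v\<in>-W - F. var v) * (\<Prod>v\<in>G - (F \<inter> W). var v)) * mono F"
        unfolding s_def mono_def by (rule prod_split_lemma[OF F(2)])
      have mF: "mono F \<in> J" unfolding J_def using F(1) gen_ideal_sub by blast
      have "((\<Prod>v\<in>-W - F. var v) * (\<Prod>v\<in>G - (F \<inter> W). var v)) * mono F \<in> J"
        using Jid mF unfolding is_ideal_def by blast
      then show ?thesis unfolding mem_Collect_eq eq .
    qed
    have IK: "?I \<subseteq> {g. s * g \<in> J}"
      unfolding facet_ideal_def using gen_ideal_least[OF Kid] gens unfolding mono_def by blast
    obtain xs where xs: "set xs = T" "distinct xs" using finite_distinct_list[OF fT] by blast
    have "mu_loc ?I P \<le> length (map mono xs)"
      unfolding mu_loc_def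
    proof (rule Least_le, intro exI conjI)
      show "length (map mono xs) = length (map mono xs)" by simp
      show "set (map mono xs) \<subseteq> ?I" using xs(1) T(1) gen_in by auto
      show "\<forall>g\<in>?I. \<exists>s. s \<notin> P \<and> s * g \<in> gen_ideal (set (map mono xs))"
        using IK sP xs(1) unfolding J_def by auto
    qed
    also have "\<dots> = card T" using xs distinct_card by fastforce
    finally show ?thesis .
  qed
  have ht: "enat (card W) \<le> height P"
  proof -
    obtain ws where ws: "set ws = W" "distinct ws" using finite_distinct_list[of W] by auto
    define h where "h = length ws"
    have hW: "h = card W" unfolding h_def using ws distinct_card by fastforce
    define c where "c i = (if i < h then (Zid (set (take i ws)) :: ('v, 'k) mpoly set) else P)" for i
    have notin: "ws ! i \<notin> set (take i ws)" if "i < h" for i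
    proof -
      have "distinct (take (Suc i) ws)" using ws(2) by simp
      then show ?thesis using that unfolding h_def by (simp add: take_Suc_conv_app_nth)
    qed
    have inP: "var (ws ! i) \<in> P" if "i < h" for i
      using that ws(1) unfolding h_def W_def by auto
    have chain: "\<exists>c :: nat \<Rightarrow> ('v, 'k) mpoly set.
      (\<forall>i\<le>h. is_prime_ideal (c i)) \<and> (\<forall>i<h. c i \<subset> c (Suc i)) \<and> c h = P"
    proof (intro exI[of _ c] conjI allI impI)
      fix i assume "i \<le> h"
      then show "is_prime_ideal (c i)" unfolding c_def using Zid_prime assms(3) by auto
    next
      fix i assume i: "i < h"
      have sub1: "Zid (set (take i ws)) \<subseteq> (Zid (set (take (Suc i) ws)) :: ('v, 'k) mpoly set)"
        by (rule Zid_mono) (simp add: set_take_subset_set_take)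
      have v1: "var (ws ! i) \<in> (Zid (set (take (Suc i) ws)) :: ('v, 'k) mpoly set)"
        using i unfolding h_def by (intro var_in_Zid) (simp add: take_Suc_conv_app_nth)
      have v2: "var (ws ! i) \<notin> (Zid (set (take i ws)) :: ('v, 'k) mpoly set)"
        using notin[OF i] by (rule var_notin_Zid)
      show "c i \<subset> c (Suc i)"
      proof (cases "Suc i < h")
        case True
        then show ?thesis unfolding c_def using i sub1 v1 v2 by auto
      next
        case False
        have "var ` set (take i ws) \<subseteq> P" using ws(1) set_take_subset[of i ws] unfolding W_def by auto
        then have "(Zid (set (take i ws)) :: ('v, 'k) mpoly set) \<subseteq> P" by (rule Zid_sub[OF Pid])
        then show ?thesis unfolding c_def using i False inP[OF i] v2 by auto
      qed
    next
      show "c h = P" unfolding c_def by simp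
    qed
    show ?thesis unfolding height_def hW[symmetric]
      by (rule Sup_upper) (use chain in blast)
  qed
  have "enat (mu_loc ?I P) \<le> enat (card W)" using mu T(2) by simp
  also have "\<dots> \<le> height P" by (rule ht)
  finally show ?thesis .
qed

end
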